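(* Let $X,Y,E,F$ be in Situation 1 or Situation 3 (see context), with $E$ finite-dimensional, and let $T:A(X,E)\to A(Y,F)$ be a linear biseparating map. Then $F$ is finite-dimensional and linearly isomorphic to $E$ (i.e. $\dim F=\dim E$).
   Context: $\mathbb K=\mathbb R$ or $\mathbb C$; $E,F$ are $\mathbb K$-normed spaces. For a topological space $Z$ and normed space $G$, $C(Z,G)$ denotes the continuous $G$-valued functions on $Z$, and for a metric space $Z$, $C_b^u(Z,G)$ the bounded uniformly continuous ones. Situation 1: $X,Y$ realcompact completely regular spaces, $A(X,E)=C(X,E)$, $A(Y,F)=C(Y,F)$. Situation 3: $X,Y$ complete metric spaces, $A(X,E)=C_b^u(X,E)$, $A(Y,F)=C_b^u(Y,F)$. The cozero set of $f$ is $c(f)=\{x: f(x)\neq0\}$. A map $T$ is separating if it is additive and $c(Tf)\cap c(Tg)=\emptyset$ whenever $c(f)\cap c(g)=\emptyset$; biseparating if it is bijective and both $T$ and $T^{-1}$ are separating. *)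

theory Defs
  imports "HOL-Analysis.Analysis"
begin

definition zero_sets :: "'a topology \<Rightarrow> 'a set set" where
  "zero_sets X = {{x \<in> topspace X. f x = 0} | f. continuous_map X euclideanreal f}"

definition z_filter :: "'a topology \<Rightarrow> 'a set set \<Rightarrow> bool" where
  "z_filter X \<F> \<longleftrightarrow> \<F> \<subseteq> zero_sets X \<and> \<F> \<noteq> {} \<and> {} \<notin> \<F>
     \<and> (\<forall>A\<in>\<F>. \<forall>B\<in>\<F>. A \<inter> B \<in> \<F>)
     \<and> (\<forall>A\<in>\<F>. \<forall>B\<in>zero_sets X. A \<subseteq> B \<longrightarrow> B \<in> \<F>)"

definition z_ultrafilter :: "'a topology \<Rightarrow> 'a set set \<Rightarrow> bool" where
  "z_ultrafilter X \<F> \<longleftrightarrow> z_filter X \<F> \<and> (\<forall>\<G>. z_filter X \<G> \<and> \<F> \<subseteq> \<G> \<longrightarrow> \<G> = \<F>)"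

definition countable_intersection_property :: "'a set set \<Rightarrow> bool" where
  "countable_intersection_property \<F> \<longleftrightarrow>
     (\<forall>\<C>. \<C> \<subseteq> \<F> \<and> \<C> \<noteq> {} \<and> countable \<C> \<longrightarrow> \<Inter>\<C> \<noteq> {})"

definition realcompact :: "'a topology \<Rightarrow> bool" where
  "realcompact X \<longleftrightarrow> completely_regular_space X \<and> Hausdorff_space X \<and>
     (\<forall>\<F>. z_ultrafilter X \<F> \<and> countable_intersection_property \<F> \<longrightarrow> \<Inter>\<F> \<noteq> {})"

definition C_space :: "'a topology \<Rightarrow> ('a \<Rightarrow> 'e::real_normed_vector) set" where
  "C_space X = {f. continuous_map X euclidean f \<and> (\<forall>x. x \<notin> topspace X \<longrightarrow> f x = 0)}"

definition Cbu_space :: "'a metric \<Rightarrow> ('a \<Rightarrow> 'e::real_normed_vector) set" where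
  "Cbu_space m = {f. uniformly_continuous_map m euclidean_metric f
                    \<and> (\<exists>B. \<forall>x\<in>mspace m. norm (f x) \<le> B)
                    \<and> (\<forall>x. x \<notin> mspace m \<longrightarrow> f x = 0)}"

definition cozero :: "'a topology \<Rightarrow> ('a \<Rightarrow> 'e::zero) \<Rightarrow> 'a set" where
  "cozero X f = {x \<in> topspace X. f x \<noteq> 0}"

definition separating_map ::
  "'a topology \<Rightarrow> 'b topology \<Rightarrow> ('a \<Rightarrow> 'e::real_normed_vector) set
     \<Rightarrow> (('a \<Rightarrow> 'e) \<Rightarrow> ('b \<Rightarrow> 'f::real_normed_vector)) \<Rightarrow> bool" where
  "separating_map X Y A T \<longleftrightarrow>
     (\<forall>f\<in>A. \<forall>g\<in>A. T (\<lambda>x. f x + g x) = (\<lambda>y. T f y + T g y)) \<and>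
     (\<forall>f\<in>A. \<forall>g\<in>A. cozero X f \<inter> cozero X g = {} \<longrightarrow> cozero Y (T f) \<inter> cozero Y (T g) = {})"

definition biseparating_map ::
  "'a topology \<Rightarrow> 'b topology \<Rightarrow> ('a \<Rightarrow> 'e::real_normed_vector) set \<Rightarrow> ('b \<Rightarrow> 'f::real_normed_vector) set
     \<Rightarrow> (('a \<Rightarrow> 'e) \<Rightarrow> ('b \<Rightarrow> 'f)) \<Rightarrow> bool" where
  "biseparating_map X Y A B T \<longleftrightarrow> bij_betw T A B \<and> separating_map X Y A T
     \<and> separating_map Y X B (inv_into A T)"

definition linear_on :: "('a \<Rightarrow> 'e::real_normed_vector) set \<Rightarrow> (('a \<Rightarrow> 'e) \<Rightarrow> ('b \<Rightarrow> 'f::real_normed_vector)) \<Rightarrow> bool" where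
  "linear_on A T \<longleftrightarrow> (\<forall>f\<in>A. \<forall>g\<in>A. T (\<lambda>x. f x + g x) = (\<lambda>y. T f y + T g y)) \<and>
     (\<forall>c::real. \<forall>f\<in>A. T (\<lambda>x. c *\<^sub>R f x) = (\<lambda>y. c *\<^sub>R T f y))"

definition finite_dim_space :: "'e::real_vector itself \<Rightarrow> bool" where
  "finite_dim_space _ \<longleftrightarrow> (\<exists>B::'e set. finite B \<and> span B = UNIV)"

end

theory Submission
  imports Defs
begin

definition pw :: "real \<Rightarrow> real" where
  "pw r = r - arcsin (sin (2*pi*r)) / (2*pi)"

lemma pw_cont: "continuous_on S pw"
  unfolding pw_def
  by (intro continuous_intros) auto

lemma pw_cont_comp [continuous_intros]: "continuous_on S f \<Longrightarrow> continuous_on S (\<lambda>x. pw (f x))"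
  using continuous_on_compose2[OF pw_cont[of UNIV], of S f] by auto

lemma pw_flat:
  assumes "\<bar>r - of_int n\<bar> \<le> 1/4"
  shows "pw r = of_int n"
proof -
  have "sin (2*pi*r) = sin (2*pi*(r - of_int n) + (2*pi) * of_int n)"
    by (simp add: algebra_simps)
  also have "\<dots> = sin (2*pi*(r - of_int n))"
    by (simp add: sin_add)
  finally have e: "sin (2*pi*r) = sin (2*pi*(r - of_int n))" .
  have "\<bar>2*pi*(r - of_int n)\<bar> = 2*pi*\<bar>r - of_int n\<bar>"
    by (simp add: abs_mult)
  also have "\<dots> \<le> 2*pi*(1/4)"
    using assms pi_gt_zero by (intro mult_left_mono) auto
  finally have "\<bar>2*pi*(r - of_int n)\<bar> \<le> pi/2" by simp
  then have "- (pi/2) \<le> 2*pi*(r - of_int n)" "2*pi*(r - of_int n) \<le> pi/2"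
    unfolding abs_le_iff by linarith+
  then have "arcsin (sin (2*pi*r)) = 2*pi*(r - of_int n)"
    using e arcsin_sin by simp
  then show ?thesis unfolding pw_def by simp
qed

lemma pw_bound: "\<bar>pw r - r\<bar> \<le> 1/4"
proof -
  have "-1 \<le> sin (2*pi*r)" "sin (2*pi*r) \<le> 1" by auto
  then have "- (pi/2) \<le> arcsin (sin (2*pi*r)) \<and> arcsin (sin (2*pi*r)) \<le> pi/2"
    by (rule arcsin_bounded)
  then have "\<bar>arcsin (sin (2*pi*r))\<bar> \<le> pi/2" unfolding abs_le_iff by linarith
  then have "\<bar>arcsin (sin (2*pi*r)) / (2*pi)\<bar> \<le> (pi/2) / (2*pi)"
    by (simp add: abs_div divide_right_mono)
  also have "\<dots> = 1/4" by simp
  finally show ?thesis unfolding pw_def by simp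
qed

lemma cover3: "\<exists>s\<in>{0, 1/3, 2/3::real}. \<exists>n::int. \<bar>s + r - of_int n\<bar> < 1/4"
proof -
  define m where "m = \<lfloor>r\<rfloor>"
  have m: "of_int m \<le> r" "r < of_int m + 1" unfolding m_def by linarith+
  show ?thesis
  proof (cases "r - of_int m < 1/4")
    case True then show ?thesis using m by (intro bexI[of _ 0]) (auto intro!: exI[of _ m])
  next
    case F1: False
    show ?thesis
    proof (cases "r - of_int m < 7/12")
      case True then show ?thesis using m F1
        proof -
        have "\<bar>2/3 + r - of_int (m+1)\<bar> < 1/4" using m F1 True unfolding abs_less_iff by simp
        then show ?thesis by blast
      qed
    next
      case F2: False
      show ?thesis
      proof (cases "r - of_int m < 11/12")
        case True then show ?thesis using m F2
          proof -
          have "\<bar>1/3 + r - of_int (m+1)\<bar> < 1/4" using m F2 True unfolding abs_less_iff by simp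
          then show ?thesis by blast
        qed
      next
        case False then show ?thesis using m
          proof -
          have "\<bar>0 + r - of_int (m+1)\<bar> < 1/4" using m False unfolding abs_less_iff by simp
          then show ?thesis by blast
        qed
      qed
    qed
  qed
qed

definition Gs :: "real \<Rightarrow> 'e::real_normed_vector \<Rightarrow> 'e" where
  "Gs s v = (if v = 0 then 0 else pw (s + 1 / sqrt (norm v)) *\<^sub>R v)"

lemma Gs_zero [simp]: "Gs s 0 = 0" by (simp add: Gs_def)

lemma Gs_flat:
  "v \<noteq> 0 \<Longrightarrow> \<bar>s + 1 / sqrt (norm v) - of_int n\<bar> < 1/4 \<Longrightarrow> Gs s v = of_int n *\<^sub>R v"
  unfolding Gs_def using pw_flat[of "s + 1 / sqrt (norm v)" n] by simp

lemma q_bound: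
  assumes "s \<ge> 0" "t > 0"
  shows "\<bar>pw (s + 1 / sqrt t)\<bar> \<le> s + 1/4 + 1 / sqrt t"
proof -
  have "0 \<le> 1 / sqrt t" using assms by simp
  then show ?thesis using pw_bound[of "s + 1 / sqrt t"] assms
    unfolding abs_le_iff by linarith
qed

lemma Gs_bound:
  assumes "s \<ge> 0"
  shows "norm (Gs s v) \<le> (s + 1/4) * norm v + sqrt (norm v)"
proof (cases "v = 0")
  case False
  then have t: "norm v > 0" by simp
  have "norm (Gs s v) = \<bar>pw (s + 1 / sqrt (norm v))\<bar> * norm v"
    using False by (simp add: Gs_def)
  also have "\<dots> \<le> (s + 1/4 + 1 / sqrt (norm v)) * norm v"
    using q_bound[OF assms t] t by (simp add: mult_right_mono)
  also have "\<dots> = (s + 1/4) * norm v + sqrt (norm v)"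
  proof -
    have "1 / sqrt (norm v) * norm v = sqrt (norm v)"
      using real_div_sqrt[of "norm v"] by simp
    then show ?thesis by (simp add: algebra_simps)
  qed
  finally show ?thesis .
qed simp

lemma q_cont: "s \<ge> 0 \<Longrightarrow> \<eta> > 0 \<Longrightarrow> continuous_on {\<eta>..C} (\<lambda>t. pw (s + 1 / sqrt t))"
  by (intro continuous_intros) auto

lemma Gs_uc:
  fixes s B \<epsilon> :: real
  assumes s: "s \<ge> 0" and e: "\<epsilon> > 0"
  shows "\<exists>\<delta>>0. \<forall>a b::'e::real_normed_vector. norm a \<le> B \<longrightarrow> norm b \<le> B \<longrightarrow> dist a b < \<delta>
            \<longrightarrow> dist (Gs s a) (Gs s b) < \<epsilon>"
proof -
  define K where "K = s + 1/4"
  have K: "K > 0" using s by (simp add: K_def)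
  define t0 where "t0 = min ((\<epsilon>/4)/(K+1)) ((\<epsilon>/4)^2)"
  have t0: "t0 > 0" using e K by (simp add: t0_def)
  have small: "norm (Gs s v) < \<epsilon>/2" if v: "norm v \<le> t0" for v :: 'e
  proof -
    have "K * norm v \<le> K * ((\<epsilon>/4)/(K+1))"
      using v K by (intro mult_left_mono) (auto simp: t0_def)
    also have "\<dots> < \<epsilon>/4" using K e by (simp add: field_simps)
    finally have 1: "K * norm v < \<epsilon>/4" .
    have "sqrt (norm v) \<le> sqrt ((\<epsilon>/4)^2)"
      using v by (intro real_sqrt_le_mono) (auto simp: t0_def)
    also have "\<dots> = \<epsilon>/4" using e by simp
    finally have 2: "sqrt (norm v) \<le> \<epsilon>/4" .
    show ?thesis using Gs_bound[OF s, of v] 1 2 unfolding K_def by linarith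
  qed
  define \<eta> where "\<eta> = t0/2"
  have eta: "\<eta> > 0" using t0 by (simp add: \<eta>_def)
  define B' where "B' = max \<eta> B"
  have B': "B' > 0" "B \<le> B'" "\<eta> \<le> B'" using eta by (auto simp: B'_def)
  define q where "q = (\<lambda>t. pw (s + 1 / sqrt t))"
  have uc: "uniformly_continuous_on {\<eta>..B'} q"
    unfolding q_def by (intro compact_uniformly_continuous q_cont s eta) auto
  have pos: "\<epsilon> / (2*(B'+1)) > 0" using B' e by simp
  from uc[unfolded uniformly_continuous_on_def, rule_format, OF pos]
  obtain \<delta>1 where d1: "\<delta>1 > 0" and
    d1'': "\<forall>x\<in>{\<eta>..B'}. \<forall>x'\<in>{\<eta>..B'}. dist x' x < \<delta>1 \<longrightarrow> dist (q x') (q x) < \<epsilon> / (2*(B'+1))"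
    by blast
  have d1': "\<And>x x'. x \<in> {\<eta>..B'} \<Longrightarrow> x' \<in> {\<eta>..B'} \<Longrightarrow> dist x' x < \<delta>1
           \<Longrightarrow> dist (q x') (q x) < \<epsilon> / (2*(B'+1))"
    using d1'' by blast
  define Mq where "Mq = K + 1 / sqrt \<eta>"
  have Mq: "\<bar>q t\<bar> \<le> Mq" if "t \<ge> \<eta>" for t
  proof -
    have "1 / sqrt t \<le> 1 / sqrt \<eta>" using that eta
      by (intro divide_left_mono) auto
    then show ?thesis using q_bound[OF s, of t] that eta unfolding q_def Mq_def K_def by linarith
  qed
  have Mq0: "Mq \<ge> 0" using K eta by (simp add: Mq_def)
  define \<delta> where "\<delta> = min \<eta> (min \<delta>1 (\<epsilon> / (2*(Mq+1))))"
  have d: "\<delta> > 0" using eta d1 e Mq0 by (simp add: \<delta>_def)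
  show ?thesis
  proof (intro exI[of _ \<delta>] conjI allI impI d)
    fix a b :: 'e
    assume a: "norm a \<le> B" and b: "norm b \<le> B" and ab: "dist a b < \<delta>"
    have nab: "\<bar>norm a - norm b\<bar> < \<delta>"
      using ab norm_triangle_ineq3[of a b] by (simp add: dist_norm)
    show "dist (Gs s a) (Gs s b) < \<epsilon>"
    proof (cases "norm a < \<eta> \<or> norm b < \<eta>")
      case True
      have dle: "\<delta> \<le> \<eta>" by (simp add: \<delta>_def)
      have "norm a - norm b < \<eta>" "norm b - norm a < \<eta>" using nab dle by (auto simp: abs_less_iff)
      then have "norm a \<le> t0" "norm b \<le> t0"
        using True unfolding \<eta>_def by linarith+
      then have "norm (Gs s a) < \<epsilon>/2" "norm (Gs s b) < \<epsilon>/2" using small by auto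
      then show ?thesis
        using norm_triangle_ineq4[of "Gs s a" "Gs s b"] by (simp add: dist_norm)
    next
      case False
      then have an: "norm a \<ge> \<eta>" and bn: "norm b \<ge> \<eta>" by auto
      then have a0: "a \<noteq> 0" and b0: "b \<noteq> 0" using eta by auto
      have Ga: "Gs s a = q (norm a) *\<^sub>R a" and Gb: "Gs s b = q (norm b) *\<^sub>R b"
        using a0 b0 by (simp_all add: Gs_def q_def)
      have eq: "Gs s a - Gs s b = q (norm a) *\<^sub>R (a - b) + (q (norm a) - q (norm b)) *\<^sub>R b"
        unfolding Ga Gb by (simp add: algebra_simps)
      have "norm (q (norm a) *\<^sub>R (a - b)) \<le> Mq * \<delta>"
        using Mq[OF an] ab Mq0 by (simp add: dist_norm mult_mono less_imp_le)
      also have "\<dots> \<le> Mq * (\<epsilon> / (2*(Mq+1)))"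
        using Mq0 by (intro mult_left_mono) (auto simp: \<delta>_def)
      also have "\<dots> < \<epsilon>/2"
        using Mq0 e by (simp add: field_simps)
      finally have 1: "norm (q (norm a) *\<^sub>R (a - b)) < \<epsilon>/2" .
      have qd: "\<bar>q (norm a) - q (norm b)\<bar> < \<epsilon> / (2*(B'+1))"
        using d1'[of "norm b" "norm a"] an bn a b B' nab
        by (auto simp: dist_real_def \<delta>_def)
      have "norm ((q (norm a) - q (norm b)) *\<^sub>R b) \<le> \<epsilon> / (2*(B'+1)) * B'"
      proof -
        have "norm ((q (norm a) - q (norm b)) *\<^sub>R b) = \<bar>q (norm a) - q (norm b)\<bar> * norm b" by simp
        also have "\<dots> \<le> \<epsilon> / (2*(B'+1)) * B'"
          using qd b B' by (intro mult_mono) auto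
        finally show ?thesis .
      qed
      also have "\<dots> < \<epsilon>/2" using B' e by (simp add: field_simps)
      finally have 2: "norm ((q (norm a) - q (norm b)) *\<^sub>R b) < \<epsilon>/2" .
      show ?thesis unfolding dist_norm eq
        using norm_triangle_ineq[of "q (norm a) *\<^sub>R (a - b)" "(q (norm a) - q (norm b)) *\<^sub>R b"] 1 2
        by linarith
    qed
  qed
qed

lemma Gs_cont:
  assumes s: "s \<ge> 0"
  shows "continuous_on UNIV (Gs s :: 'e::real_normed_vector \<Rightarrow> 'e)"
proof -
  have "isCont (Gs s) v" for v :: 'e
  proof (rule continuous_at_eps_delta[THEN iffD2], intro allI impI)
    fix e :: real assume e: "e > 0"
    obtain \<delta> where d: "\<delta> > 0" and H: "\<forall>a b::'e. norm a \<le> norm v + 1 \<longrightarrow> norm b \<le> norm v + 1 \<longrightarrow> dist a b < \<delta>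
            \<longrightarrow> dist (Gs s a) (Gs s b) < e"
      using Gs_uc[OF s e, of "norm v + 1"] by blast
    show "\<exists>d>0. \<forall>x'. dist x' v < d \<longrightarrow> dist (Gs s x') (Gs s v) < e"
    proof (intro exI[of _ "min \<delta> 1"] conjI allI impI)
      fix x' assume "dist x' v < min \<delta> 1"
      then show "dist (Gs s x') (Gs s v) < e"
        using H[rule_format, of x' v] norm_triangle_ineq2[of x' v]
        by (auto simp: dist_norm)
    qed (use d in auto)
  qed
  then show ?thesis by (simp add: continuous_on_eq_continuous_at)
qed

definition S1sp :: "'x topology \<Rightarrow> ('x \<Rightarrow> 'e::real_normed_vector) set \<Rightarrow> bool" where
  "S1sp X A \<longleftrightarrow> completely_regular_space X \<and> A = C_space X"

definition S3sp :: "'x topology \<Rightarrow> ('x \<Rightarrow> 'e::real_normed_vector) set \<Rightarrow> bool" where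
  "S3sp X A \<longleftrightarrow> (\<exists>m. X = mtopology_of m \<and> A = Cbu_space m)"

definition goodsp :: "'x topology \<Rightarrow> ('x \<Rightarrow> 'e::real_normed_vector) set \<Rightarrow> bool" where
  "goodsp X A \<longleftrightarrow> S1sp X A \<or> S3sp X A"

lemma ucm_iff:
  "uniformly_continuous_map m euclidean_metric f \<longleftrightarrow>
   (\<forall>\<epsilon>>0. \<exists>\<delta>>0. \<forall>x\<in>mspace m. \<forall>y\<in>mspace m. mdist m y x < \<delta> \<longrightarrow> dist (f y) (f x) < \<epsilon>)"
  by (simp add: uniformly_continuous_map_def)

lemma Cbu_iff:
  "f \<in> Cbu_space m \<longleftrightarrow>
    (\<forall>\<epsilon>>0. \<exists>\<delta>>0. \<forall>x\<in>mspace m. \<forall>y\<in>mspace m. mdist m y x < \<delta> \<longrightarrow> dist (f y) (f x) < \<epsilon>)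
    \<and> (\<exists>B. \<forall>x\<in>mspace m. norm (f x) \<le> B) \<and> (\<forall>x. x \<notin> mspace m \<longrightarrow> f x = 0)"
  unfolding Cbu_space_def ucm_iff by simp

lemma cm_scaleR:
  fixes f :: "'a \<Rightarrow> 'e::real_normed_vector"
  shows "continuous_map X euclideanreal g \<Longrightarrow> continuous_map X euclidean f
    \<Longrightarrow> continuous_map X euclidean (\<lambda>x. g x *\<^sub>R f x)"
  by (simp add: continuous_map_atin tendsto_scaleR)

lemma good_zero_out: "goodsp X A \<Longrightarrow> f \<in> A \<Longrightarrow> x \<notin> topspace X \<Longrightarrow> f x = 0"
  unfolding goodsp_def S1sp_def S3sp_def C_space_def Cbu_space_def by auto

lemma good_cont: "goodsp X A \<Longrightarrow> f \<in> A \<Longrightarrow> continuous_map X euclidean f"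
  unfolding goodsp_def S1sp_def S3sp_def C_space_def Cbu_space_def
  by (auto dest: uniformly_continuous_imp_continuous_map)

lemma good_add:
  assumes "goodsp X A" "f \<in> A" "g \<in> A"
  shows "(\<lambda>x. f x + g x) \<in> A"
  using assms(1) unfolding goodsp_def
proof
  assume "S1sp X A" then show ?thesis using assms(2,3)
    by (auto simp: S1sp_def C_space_def intro: continuous_map_add)
next
  assume "S3sp X A"
  then obtain m where m: "X = mtopology_of m" "A = Cbu_space m" by (auto simp: S3sp_def)
  have f: "f \<in> Cbu_space m" and g: "g \<in> Cbu_space m" using assms m by auto
  show ?thesis unfolding m(2) Cbu_iff
  proof (intro conjI allI impI)
    fix \<epsilon> :: real assume e: "\<epsilon> > 0"
    then have e2: "\<epsilon>/2 > 0" by simp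
    obtain d1 where d1: "d1 > 0" "\<forall>x\<in>mspace m. \<forall>y\<in>mspace m. mdist m y x < d1 \<longrightarrow> dist (f y) (f x) < \<epsilon>/2"
      using f e2 unfolding Cbu_iff by meson
    obtain d2 where d2: "d2 > 0" "\<forall>x\<in>mspace m. \<forall>y\<in>mspace m. mdist m y x < d2 \<longrightarrow> dist (g y) (g x) < \<epsilon>/2"
      using g e2 unfolding Cbu_iff by meson
    show "\<exists>\<delta>>0. \<forall>x\<in>mspace m. \<forall>y\<in>mspace m. mdist m y x < \<delta> \<longrightarrow> dist (f y + g y) (f x + g x) < \<epsilon>"
    proof (intro exI[of _ "min d1 d2"] conjI ballI impI)
      fix x y assume xy: "x \<in> mspace m" "y \<in> mspace m" "mdist m y x < min d1 d2"
      then have "dist (f y) (f x) < \<epsilon>/2" "dist (g y) (g x) < \<epsilon>/2" using d1 d2 by auto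
      then show "dist (f y + g y) (f x + g x) < \<epsilon>"
        using dist_triangle_add[of "f y" "g y" "f x" "g x"] by linarith
    qed (use d1 d2 in auto)
  next
    obtain B1 where "\<forall>x\<in>mspace m. norm (f x) \<le> B1" using f unfolding Cbu_iff by blast
    moreover obtain B2 where "\<forall>x\<in>mspace m. norm (g x) \<le> B2" using g unfolding Cbu_iff by blast
    ultimately have "\<forall>x\<in>mspace m. norm (f x + g x) \<le> B1 + B2"
      by (metis add_mono norm_triangle_le)
    then show "\<exists>B. \<forall>x\<in>mspace m. norm (f x + g x) \<le> B" by blast
  next
    fix x assume "x \<notin> mspace m" then show "f x + g x = 0" using f g unfolding Cbu_iff by auto
  qed
qed

lemma good_scale:
  assumes "goodsp X A" "f \<in> A"
  shows "(\<lambda>x. c *\<^sub>R f x) \<in> A"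
  using assms(1) unfolding goodsp_def
proof
  assume "S1sp X A" then show ?thesis using assms(2)
    by (auto simp: S1sp_def C_space_def intro: cm_scaleR)
next
  assume "S3sp X A"
  then obtain m where m: "X = mtopology_of m" "A = Cbu_space m" by (auto simp: S3sp_def)
  have f: "f \<in> Cbu_space m" using assms m by auto
  show ?thesis unfolding m(2) Cbu_iff
  proof (intro conjI allI impI)
    fix \<epsilon> :: real assume e: "\<epsilon> > 0"
    then have e2: "\<epsilon>/(\<bar>c\<bar>+1) > 0" by simp
    obtain d1 where d1: "d1 > 0" "\<forall>x\<in>mspace m. \<forall>y\<in>mspace m. mdist m y x < d1 \<longrightarrow> dist (f y) (f x) < \<epsilon>/(\<bar>c\<bar>+1)"
      using f e2 unfolding Cbu_iff by meson
    show "\<exists>\<delta>>0. \<forall>x\<in>mspace m. \<forall>y\<in>mspace m. mdist m y x < \<delta> \<longrightarrow> dist (c *\<^sub>R f y) (c *\<^sub>R f x) < \<epsilon>"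
    proof (intro exI[of _ d1] conjI ballI impI)
      fix x y assume xy: "x \<in> mspace m" "y \<in> mspace m" "mdist m y x < d1"
      then have h: "dist (f y) (f x) < \<epsilon>/(\<bar>c\<bar>+1)" using d1 by auto
      have "dist (c *\<^sub>R f y) (c *\<^sub>R f x) = \<bar>c\<bar> * dist (f y) (f x)"
        by (simp add: dist_norm flip: scaleR_diff_right)
      also have "\<dots> \<le> (\<bar>c\<bar>+1) * dist (f y) (f x)" by (simp add: mult_right_mono)
      also have "\<dots> < (\<bar>c\<bar>+1) * (\<epsilon>/(\<bar>c\<bar>+1))"
        using h by (intro mult_strict_left_mono) auto
      also have "\<dots> = \<epsilon>" by simp
      finally show "dist (c *\<^sub>R f y) (c *\<^sub>R f x) < \<epsilon>" .
    qed (use d1 in auto)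
  next
    obtain B1 where "\<forall>x\<in>mspace m. norm (f x) \<le> B1" using f unfolding Cbu_iff by blast
    then have "\<forall>x\<in>mspace m. norm (c *\<^sub>R f x) \<le> \<bar>c\<bar> * B1"
      by (simp add: mult_left_mono)
    then show "\<exists>B. \<forall>x\<in>mspace m. norm (c *\<^sub>R f x) \<le> B" by blast
  next
    fix x assume "x \<notin> mspace m" then show "c *\<^sub>R f x = 0" using f unfolding Cbu_iff by auto
  qed
qed

lemma good_zero: "goodsp X A \<Longrightarrow> (\<lambda>x. 0) \<in> A"
  unfolding goodsp_def S1sp_def S3sp_def C_space_def
  by (auto simp: Cbu_iff)

lemma good_diff:
  assumes "goodsp X A" "f \<in> A" "g \<in> A"
  shows "(\<lambda>x. f x - g x) \<in> A"
proof -
  have "(\<lambda>x. f x + (-1) *\<^sub>R g x) \<in> A" using good_add[OF assms(1,2) good_scale[OF assms(1,3)]] .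
  then show ?thesis by simp
qed

lemma good_const:
  assumes "goodsp X A"
  shows "(\<lambda>x. if x \<in> topspace X then w else 0) \<in> A"
  using assms unfolding goodsp_def
proof
  assume "S1sp X A"
  moreover have "continuous_map X euclidean (\<lambda>x. if x \<in> topspace X then w else 0)"
    by (rule continuous_map_eq[of X euclidean "\<lambda>x. w"]) auto
  ultimately show ?thesis by (auto simp: S1sp_def C_space_def)
next
  assume "S3sp X A"
  then obtain m where m: "X = mtopology_of m" "A = Cbu_space m" by (auto simp: S3sp_def)
  show ?thesis unfolding m Cbu_iff
    by (auto intro!: exI[of _ "norm w"])
qed

lemma good_Gs:
  fixes f :: "'x \<Rightarrow> 'e::real_normed_vector"
  assumes "goodsp X A" "f \<in> A" "s \<ge> 0"
  shows "(\<lambda>x. Gs s (f x)) \<in> A"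
  using assms(1) unfolding goodsp_def
proof
  assume "S1sp X A" then show ?thesis using assms(2) Gs_cont[OF assms(3)]
    by (auto simp: S1sp_def C_space_def intro: continuous_map_compose[of X euclidean f euclidean "Gs s", unfolded o_def])
next
  assume "S3sp X A"
  then obtain m where m: "X = mtopology_of m" "A = Cbu_space m" by (auto simp: S3sp_def)
  have f: "f \<in> Cbu_space m" using assms m by auto
  obtain B where B: "\<forall>x\<in>mspace m. norm (f x) \<le> B" using f unfolding Cbu_iff by blast
  show ?thesis unfolding m(2) Cbu_iff
  proof (intro conjI allI impI)
    fix \<epsilon> :: real assume e: "\<epsilon> > 0"
    obtain d where d: "d > 0" "\<forall>a b::'e. norm a \<le> B \<longrightarrow> norm b \<le> B \<longrightarrow> dist a b < d \<longrightarrow> dist (Gs s a) (Gs s b) < \<epsilon>"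
      using Gs_uc[OF assms(3) e, of B] by blast
    obtain d1 where d1: "d1 > 0" "\<forall>x\<in>mspace m. \<forall>y\<in>mspace m. mdist m y x < d1 \<longrightarrow> dist (f y) (f x) < d"
      using f d(1) unfolding Cbu_iff by meson
    show "\<exists>\<delta>>0. \<forall>x\<in>mspace m. \<forall>y\<in>mspace m. mdist m y x < \<delta> \<longrightarrow> dist (Gs s (f y)) (Gs s (f x)) < \<epsilon>"
    proof (intro exI[of _ d1] conjI ballI impI)
      fix x y assume xy: "x \<in> mspace m" "y \<in> mspace m" "mdist m y x < d1"
      then have "dist (f y) (f x) < d" using d1 by auto
      then show "dist (Gs s (f y)) (Gs s (f x)) < \<epsilon>" using d(2)[rule_format, of "f y" "f x"] B xy by auto
    qed (use d1 in auto)
  next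
    have "\<forall>x\<in>mspace m. norm (Gs s (f x)) \<le> (s + 1/4) * max B 0 + sqrt (max B 0)"
    proof
      fix x assume x: "x \<in> mspace m"
      have "norm (Gs s (f x)) \<le> (s + 1/4) * norm (f x) + sqrt (norm (f x))" by (rule Gs_bound[OF assms(3)])
      also have "\<dots> \<le> (s + 1/4) * max B 0 + sqrt (max B 0)"
        using B x assms(3) by (intro add_mono mult_left_mono real_sqrt_le_mono) auto
      finally show "norm (Gs s (f x)) \<le> (s + 1/4) * max B 0 + sqrt (max B 0)" .
    qed
    then show "\<exists>B. \<forall>x\<in>mspace m. norm (Gs s (f x)) \<le> B" by blast
  next
    fix x assume "x \<notin> mspace m" then show "Gs s (f x) = 0" using f unfolding Cbu_iff by auto
  qed
qed

lemma good_bump: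
  fixes A :: "('x \<Rightarrow> 'e::real_normed_vector) set" and e :: 'e
  assumes "goodsp X A" "openin X U" "x1 \<in> U" "e \<noteq> 0"
  shows "\<exists>u\<in>A. u x1 \<noteq> 0 \<and> (\<forall>x. u x \<noteq> 0 \<longrightarrow> x \<in> U)"
  using assms(1) unfolding goodsp_def
proof
  assume S1: "S1sp X A"
  then have cr: "completely_regular_space X" and A: "A = C_space X" by (auto simp: S1sp_def)
  have U: "U \<subseteq> topspace X" using assms(2) by (simp add: openin_subset)
  have "closedin X (topspace X - U)" using assms(2) by blast
  moreover have "x1 \<in> topspace X - (topspace X - U)" using assms(3) U by auto
  ultimately obtain f :: "'x \<Rightarrow> real" where f: "continuous_map X (top_of_set {0..1}) f" "f x1 = 0"
      "f ` (topspace X - U) \<subseteq> {1}"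
    using cr unfolding completely_regular_space_def by metis
  have fc: "continuous_map X euclideanreal f" using f(1) by (simp add: continuous_map_in_subtopology)
  define u where "u = (\<lambda>x. if x \<in> topspace X then (1 - f x) *\<^sub>R e else 0)"
  have "continuous_map X euclidean (\<lambda>x. (1 - f x) *\<^sub>R e)"
    by (intro cm_scaleR continuous_map_diff fc) auto
  then have "continuous_map X euclidean u"
    by (rule continuous_map_eq) (simp add: u_def)
  then have "u \<in> A" by (simp add: A C_space_def u_def)
  moreover have "u x1 \<noteq> 0" using assms(3,4) U f(2) by (auto simp: u_def)
  moreover have "\<forall>x. u x \<noteq> 0 \<longrightarrow> x \<in> U" using f(3) by (auto simp: u_def)
  ultimately show ?thesis by blast
next
  assume "S3sp X A"
  then obtain m where m: "X = mtopology_of m" "A = Cbu_space m" by (auto simp: S3sp_def)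
  interpret Metric_space "mspace m" "mdist m" by simp
  have "openin mtopology U" using assms(2) m by (simp add: mtopology_of_def)
  then obtain r where r: "r > 0" "mball x1 r \<subseteq> U" "U \<subseteq> mspace m"
    using assms(3) unfolding openin_mtopology by blast
  have x1: "x1 \<in> mspace m" using r assms(3) by auto
  define u where "u = (\<lambda>x. if x \<in> mspace m then max 0 (r - mdist m x1 x) *\<^sub>R e else 0)"
  have "u \<in> Cbu_space m" unfolding Cbu_iff
  proof (intro conjI allI impI)
    fix \<epsilon> :: real assume eps: "\<epsilon> > 0"
    show "\<exists>\<delta>>0. \<forall>x\<in>mspace m. \<forall>y\<in>mspace m. mdist m y x < \<delta> \<longrightarrow> dist (u y) (u x) < \<epsilon>"
    proof (intro exI[of _ "\<epsilon> / (norm e + 1)"] conjI ballI impI)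
      fix x y assume xy: "x \<in> mspace m" "y \<in> mspace m" "mdist m y x < \<epsilon> / (norm e + 1)"
      have "\<bar>max 0 (r - mdist m x1 y) - max 0 (r - mdist m x1 x)\<bar> \<le> \<bar>mdist m x1 y - mdist m x1 x\<bar>"
        unfolding max_def by (smt (verit))
      also have "\<dots> \<le> mdist m y x"
      proof -
        have t1: "mdist m x1 y \<le> mdist m x1 x + mdist m x y" using triangle[of x1 x y] x1 xy by simp
        have t2: "mdist m x1 x \<le> mdist m x1 y + mdist m y x" using triangle[of x1 y x] x1 xy by simp
        show ?thesis unfolding abs_le_iff using t1 t2 commute[of x y] by linarith
      qed
      finally have h: "\<bar>max 0 (r - mdist m x1 y) - max 0 (r - mdist m x1 x)\<bar> \<le> mdist m y x" .
      have "dist (u y) (u x) = \<bar>max 0 (r - mdist m x1 y) - max 0 (r - mdist m x1 x)\<bar> * norm e"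
        using xy by (simp add: u_def dist_norm flip: scaleR_diff_left)
      also have "\<dots> \<le> mdist m y x * norm e" using h by (simp add: mult_right_mono)
      also have "\<dots> \<le> mdist m y x * (norm e + 1)" by (simp add: mult_left_mono)
      also have "\<dots> < \<epsilon> / (norm e + 1) * (norm e + 1)"
      proof (rule mult_strict_right_mono)
        show "mdist m y x < \<epsilon> / (norm e + 1)" using xy(3) .
        have "0 \<le> norm e" by (rule norm_ge_zero)
        then show "0 < norm e + 1" by linarith
      qed
      also have "\<dots> = \<epsilon>"
      proof -
        have "0 \<le> norm e" by (rule norm_ge_zero)
        then have "norm e + 1 \<noteq> 0" by linarith
        then show ?thesis by simp
      qed
      finally show "dist (u y) (u x) < \<epsilon>" .
    next
      have "0 \<le> norm e" by (rule norm_ge_zero)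
      then have "0 < norm e + 1" by linarith
      then show "0 < \<epsilon> / (norm e + 1)" using eps by (rule divide_pos_pos[rotated])
    qed
  next
    have "\<forall>x\<in>mspace m. norm (u x) \<le> r * norm e"
      using r(1) by (auto simp: u_def intro!: mult_right_mono)
    then show "\<exists>B. \<forall>x\<in>mspace m. norm (u x) \<le> B" by blast
  next
    fix x assume "x \<notin> mspace m" then show "u x = 0" by (simp add: u_def)
  qed
  moreover have "u x1 \<noteq> 0" using x1 r(1) assms(4) by (simp add: u_def)
  moreover have "\<forall>x. u x \<noteq> 0 \<longrightarrow> x \<in> U"
  proof (intro allI impI)
    fix x assume "u x \<noteq> 0"
    then have "x \<in> mspace m" "mdist m x1 x < r" by (auto simp: u_def split: if_splits)
    then show "x \<in> U" using r(2) x1 by auto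
  qed
  ultimately show ?thesis using m by blast
qed

lemma S1_fun:
  fixes \<psi> :: "'x \<Rightarrow> 'f::real_normed_vector" and w :: "'f"
  assumes "S1sp X A" "\<psi> \<in> A" "continuous_on UNIV h"
  shows "(\<lambda>y. if y \<in> topspace X then h (\<psi> y) *\<^sub>R w else 0) \<in> A"
proof -
  have c: "continuous_map X euclidean \<psi>" using assms by (simp add: S1sp_def C_space_def)
  have "continuous_map X euclideanreal (\<lambda>y. h (\<psi> y))"
    using continuous_map_compose[OF c, of euclideanreal h] assms(3) by (simp add: o_def)
  then have "continuous_map X euclidean (\<lambda>y. h (\<psi> y) *\<^sub>R w)"
    by (intro cm_scaleR) auto
  then have "continuous_map X euclidean (\<lambda>y. if y \<in> topspace X then h (\<psi> y) *\<^sub>R w else 0)"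
    by (rule continuous_map_eq) simp
  then show ?thesis using assms(1) by (simp add: S1sp_def C_space_def)
qed

lemma S3_bounded:
  assumes "S3sp X A" "f \<in> A"
  shows "\<exists>B. \<forall>x\<in>topspace X. norm (f x) \<le> B"
  using assms by (auto simp: S3sp_def Cbu_iff)

lemma Pbound:
  fixes n :: int and s t :: real
  assumes n: "n \<ge> 1" and t: "t > 0" and s: "s \<ge> 0" and h: "\<bar>s + 1 / sqrt t - of_int n\<bar> < 1/4"
  shows "of_int n * (of_int n + 1)^2 * t > of_int n"
proof -
  have "1 / sqrt t < of_int n + 1" using h s unfolding abs_less_iff by linarith
  then have "1 < (of_int n + 1) * sqrt t" using t n
    by (simp add: field_simps)
  then have "1 < ((of_int n + 1) * sqrt t)^2"
    by (smt (verit) one_less_power zero_less_numeral)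
  also have "\<dots> = (of_int n + 1)^2 * t" using t by (simp add: power_mult_distrib)
  finally have "1 < (of_int n + 1)^2 * t" .
  then have "of_int n * 1 < of_int n * ((of_int n + 1)^2 * t)"
    using n by (intro mult_strict_left_mono) auto
  then show ?thesis by (simp add: mult.assoc)
qed

lemma open_flat: "open {v::'e::real_normed_vector. v \<noteq> 0 \<and> \<bar>s + 1 / sqrt (norm v) - c\<bar> < 1/4}"
proof -
  have "open ((-{0}) \<inter> (\<lambda>v::'e. s + 1 / sqrt (norm v) - c) -` {r. \<bar>r\<bar> < 1/4})"
  proof (rule continuous_open_preimage)
    show "continuous_on (-{0}) (\<lambda>v::'e. s + 1 / sqrt (norm v) - c)"
      by (intro continuous_intros) auto
    show "open {r::real. \<bar>r\<bar> < 1/4}"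
      using open_ball[of "0::real" "1/4"] by (simp add: ball_def dist_real_def)
  qed auto
  moreover have "(-{0}) \<inter> (\<lambda>v::'e. s + 1 / sqrt (norm v) - c) -` {r. \<bar>r\<bar> < 1/4}
       = {v. v \<noteq> 0 \<and> \<bar>s + 1 / sqrt (norm v) - c\<bar> < 1/4}" by auto
  ultimately show ?thesis by simp
qed

lemma fin_inj_surj:
  fixes f :: "'e::real_vector \<Rightarrow> 'e" and B :: "'e set"
  assumes B: "finite B" "span B = UNIV" and lf: "linear f" and fi: "inj f"
  shows "surj f"
proof -
  obtain C where C: "C \<subseteq> B" "independent C" "B \<subseteq> span C"
    using maximal_independent_subset[of B] by blast
  have fC: "finite C" using C(1) B(1) finite_subset by blast
  have sC: "span C = UNIV"
    using C(3) B(2) by (metis span_mono span_span top.extremum_uniqueI)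
  interpret fd: finite_dimensional_vector_space scaleR C
    by unfold_locales (use fC C(2) sC in \<open>auto simp: dependent_raw_def span_raw_def\<close>)
  show ?thesis by (rule fd.linear_inj_imp_surj) (use lf fi in \<open>auto simp: linear_def\<close>)
qed


lemma mainM:
  fixes X :: "'x topology" and Y :: "'y topology"
    and AX :: "('x \<Rightarrow> 'e::real_normed_vector) set"
    and AY :: "('y \<Rightarrow> 'f::real_normed_vector) set"
    and T :: "('x \<Rightarrow> 'e) \<Rightarrow> ('y \<Rightarrow> 'f)" and S :: "('y \<Rightarrow> 'f) \<Rightarrow> ('x \<Rightarrow> 'e)"
    and \<phi> :: "'x \<Rightarrow> 'e" and w :: 'f
  assumes sit: "(S1sp X AX \<and> S1sp Y AY) \<or> (S3sp X AX \<and> S3sp Y AY)"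
    and Tmap: "\<forall>f\<in>AX. T f \<in> AY" and Smap: "\<forall>g\<in>AY. S g \<in> AX"
    and TS: "\<forall>g\<in>AY. T (S g) = g" and ST: "\<forall>f\<in>AX. S (T f) = f"
    and Tadd: "\<forall>f\<in>AX. \<forall>g\<in>AX. T (\<lambda>x. f x + g x) = (\<lambda>y. T f y + T g y)"
    and Tsc: "\<forall>c. \<forall>f\<in>AX. T (\<lambda>x. c *\<^sub>R f x) = (\<lambda>y. c *\<^sub>R T f y)"
    and Sadd: "\<forall>f\<in>AY. \<forall>g\<in>AY. S (\<lambda>x. f x + g x) = (\<lambda>y. S f y + S g y)"
    and Ssc: "\<forall>c. \<forall>f\<in>AY. S (\<lambda>x. c *\<^sub>R f x) = (\<lambda>y. c *\<^sub>R S f y)"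
    and Tsep: "\<forall>f\<in>AX. \<forall>g\<in>AX. cozero X f \<inter> cozero X g = {} \<longrightarrow> cozero Y (T f) \<inter> cozero Y (T g) = {}"
    and Ssep: "\<forall>f\<in>AY. \<forall>g\<in>AY. cozero Y f \<inter> cozero Y g = {} \<longrightarrow> cozero X (S f) \<inter> cozero X (S g) = {}"
    and phi: "\<phi> \<in> AX" and w: "w \<noteq> 0" and Tphi: "\<forall>y\<in>topspace Y. T \<phi> y = w"
    and Yne: "topspace Y \<noteq> {}" and x1: "x1 \<in> topspace X"
  shows "\<phi> x1 \<noteq> 0"
proof
  assume phi0: "\<phi> x1 = 0"
  have gX: "goodsp X AX" and gY: "goodsp Y AY" using sit by (auto simp: goodsp_def)
  have Tdiff: "T (\<lambda>x. f x - g x) = (\<lambda>y. T f y - T g y)" if "f \<in> AX" "g \<in> AX" for f g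
  proof -
    have "T (\<lambda>x. f x + (-1) *\<^sub>R g x) = (\<lambda>y. T f y + T (\<lambda>x. (-1) *\<^sub>R g x) y)"
      using Tadd[rule_format, OF that(1) good_scale[OF gX that(2), of "-1"]] by simp
    also have "\<dots> = (\<lambda>y. T f y - T g y)"
    proof -
      have "T (\<lambda>x. (-1) *\<^sub>R g x) = (\<lambda>y. (-1) *\<^sub>R T g y)" using Tsc that(2) by blast
      then show ?thesis by (simp add: fun_eq_iff)
    qed
    finally show ?thesis by simp
  qed
  have Sdiff: "S (\<lambda>x. f x - g x) = (\<lambda>y. S f y - S g y)" if "f \<in> AY" "g \<in> AY" for f g
  proof -
    have "S (\<lambda>x. f x + (-1) *\<^sub>R g x) = (\<lambda>y. S f y + S (\<lambda>x. (-1) *\<^sub>R g x) y)"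
      using Sadd[rule_format, OF that(1) good_scale[OF gY that(2), of "-1"]] by simp
    also have "\<dots> = (\<lambda>y. S f y - S g y)"
    proof -
      have "S (\<lambda>x. (-1) *\<^sub>R g x) = (\<lambda>y. (-1) *\<^sub>R S g y)" using Ssc that(2) by blast
      then show ?thesis by (simp add: fun_eq_iff)
    qed
    finally show ?thesis by simp
  qed
  have T0: "T (\<lambda>x. 0) = (\<lambda>y. 0)"
    using Tsc[rule_format, OF good_zero[OF gX], of 0] by simp
  have S0: "S (\<lambda>x. 0) = (\<lambda>y. 0)"
    using Ssc[rule_format, OF good_zero[OF gY], of 0] by simp
  have Tnz: "\<exists>y\<in>topspace Y. T u y \<noteq> 0" if u: "u \<in> AX" "u x \<noteq> 0" for u x
  proof (rule ccontr)
    assume "\<not> ?thesis"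
    then have "T u = (\<lambda>y. 0)"
      using good_zero_out[OF gY Tmap[rule_format, OF u(1)]] by (auto simp: fun_eq_iff)
    then have "u = S (\<lambda>y. 0)" using ST u(1) by metis
    then have "u = (\<lambda>x. 0)" using S0 by simp
    then show False using u(2) by simp
  qed
  have CT: "\<forall>y\<in>topspace Y. T u y \<noteq> 0 \<longrightarrow> T a y = 0"
    if "u \<in> AX" "a \<in> AX" "\<forall>x\<in>topspace X. u x \<noteq> 0 \<longrightarrow> a x = 0" for u a
  proof -
    have "cozero X a \<inter> cozero X u = {}" using that(3) by (auto simp: cozero_def)
    then have "cozero Y (T a) \<inter> cozero Y (T u) = {}" using Tsep that(1,2) by blast
    then show ?thesis by (auto simp: cozero_def)
  qed
  have CS: "\<forall>x\<in>topspace X. S u x \<noteq> 0 \<longrightarrow> S a x = 0"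
    if "u \<in> AY" "a \<in> AY" "\<forall>y\<in>topspace Y. u y \<noteq> 0 \<longrightarrow> a y = 0" for u a
  proof -
    have "cozero Y a \<inter> cozero Y u = {}" using that(3) by (auto simp: cozero_def)
    then have "cozero X (S a) \<inter> cozero X (S u) = {}" using Ssep that(1,2) by blast
    then show ?thesis by (auto simp: cozero_def)
  qed
  obtain e0 :: 'e where e0: "e0 \<noteq> 0"
  proof -
    obtain y where y: "y \<in> topspace Y" using Yne by blast
    show ?thesis
    proof (rule ccontr)
      assume "\<not> thesis"
      then have "\<forall>e::'e. e = 0" using that by blast
      then have "\<phi> = (\<lambda>x. 0)" by auto
      then have "T \<phi> y = 0" using T0 by simp
      then show False using Tphi y w by simp
    qed
  qed
  have phic: "continuous_map X euclidean \<phi>" using good_cont[OF gX phi] .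
  have Tphi_in: "T \<phi> \<in> AY" using Tmap phi by blast
  define As where "As = (\<lambda>(s::real) (n::int). {x \<in> topspace X. \<phi> x \<noteq> 0 \<and> \<bar>s + 1 / sqrt (norm (\<phi> x)) - of_int n\<bar> < 1/4})"
  have As_open: "openin X (As s n)" for s n
  proof -
    have "openin X {x \<in> topspace X. \<phi> x \<in> {v. v \<noteq> 0 \<and> \<bar>s + 1 / sqrt (norm v) - of_int n\<bar> < 1/4}}"
      by (rule openin_continuous_map_preimage[OF phic]) (use open_flat[of s "of_int n"] in simp)
    then show ?thesis by (simp add: As_def)
  qed
  have bumpA: "\<exists>u\<in>AX. u x \<noteq> 0 \<and> (\<forall>z. u z \<noteq> 0 \<longrightarrow> z \<in> As s n)" if "x \<in> As s n" for x s n
    using good_bump[OF gX As_open that e0] .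
  define ph' where "ph' = (\<lambda>s x. Gs s (\<phi> x))"
  have ph'_in: "ph' s \<in> AX" if "s \<ge> 0" for s
    unfolding ph'_def using good_Gs[OF gX phi that] .
  have K1: "\<forall>y\<in>topspace Y. T u y \<noteq> 0 \<longrightarrow> T (ph' s) y = of_int n *\<^sub>R w"
    if s: "s \<ge> 0" and u: "u \<in> AX" "\<forall>z. u z \<noteq> 0 \<longrightarrow> z \<in> As s n" for s n u
  proof -
    define a where "a = (\<lambda>x. ph' s x - of_int n *\<^sub>R \<phi> x)"
    have nphi: "(\<lambda>x. of_int n *\<^sub>R \<phi> x) \<in> AX" using good_scale[OF gX phi] .
    have a_in: "a \<in> AX" unfolding a_def using good_diff[OF gX ph'_in[OF s] nphi] .
    have "\<forall>x\<in>topspace X. u x \<noteq> 0 \<longrightarrow> a x = 0"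
    proof (intro ballI impI)
      fix x assume "x \<in> topspace X" "u x \<noteq> 0"
      then have "x \<in> As s n" using u by blast
      then show "a x = 0" unfolding a_def ph'_def As_def using Gs_flat by auto
    qed
    then have h: "\<forall>y\<in>topspace Y. T u y \<noteq> 0 \<longrightarrow> T a y = 0" using CT u(1) a_in by blast
    have Ta: "T a = (\<lambda>y. T (ph' s) y - of_int n *\<^sub>R T \<phi> y)"
      unfolding a_def using Tdiff[OF ph'_in[OF s] nphi] Tsc phi by simp
    show ?thesis using h Tphi unfolding Ta by auto
  qed
  have Ubound: "\<exists>U N. openin X U \<and> x1 \<in> U \<and> (\<forall>n\<ge>N. \<forall>x\<in>U. x \<notin> As s n)" if s: "s \<ge> 0" for s
    using sit
  proof
    assume "S3sp X AX \<and> S3sp Y AY"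
    then obtain B where B: "\<forall>y\<in>topspace Y. norm (T (ph' s) y) \<le> B"
      using S3_bounded[of Y AY "T (ph' s)"] Tmap ph'_in[OF s] by blast
    define N where "N = \<lceil>B / norm w\<rceil> + 1"
    have "\<forall>n\<ge>N. \<forall>x\<in>topspace X. x \<notin> As s n"
    proof (intro allI impI ballI notI)
      fix n x assume n: "n \<ge> N" and x: "x \<in> topspace X" "x \<in> As s n"
      obtain u where u: "u \<in> AX" "u x \<noteq> 0" "\<forall>z. u z \<noteq> 0 \<longrightarrow> z \<in> As s n"
        using bumpA[OF x(2)] by blast
      obtain y where y: "y \<in> topspace Y" "T u y \<noteq> 0" using Tnz[OF u(1,2)] by blast
      have "T (ph' s) y = of_int n *\<^sub>R w" using K1[OF s u(1) u(3)] y by blast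
      then have "norm (T (ph' s) y) = \<bar>of_int n\<bar> * norm w" by simp
      then have b1: "\<bar>of_int n\<bar> * norm w \<le> B" using B y by metis
      have nw: "norm w > 0" using w by simp
      have "of_int n > B / norm w" using n unfolding N_def by linarith
      then have "of_int n * norm w > B" using nw by (simp add: pos_divide_less_eq)
      moreover have "of_int n * norm w \<le> \<bar>of_int n\<bar> * norm w" using nw
        by (intro mult_right_mono) auto
      ultimately show False using b1 by linarith
    qed
    then show ?thesis using x1 by (intro exI[of _ "topspace X"] exI[of _ N]) auto
  next
    assume S1: "S1sp X AX \<and> S1sp Y AY"
    define P where "P = (\<lambda>r::real. r * (r + 1)^2)"
    define \<psi> where "\<psi> = T (ph' s)"
    have psi_in: "\<psi> \<in> AY" unfolding \<psi>_def using Tmap ph'_in[OF s] by blast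
    define \<zeta> where "\<zeta> = (\<lambda>y. if y \<in> topspace Y then P (norm (\<psi> y) / norm w) *\<^sub>R w else 0)"
    have zeta_in: "\<zeta> \<in> AY" unfolding \<zeta>_def
      by (rule S1_fun) (use S1 psi_in w in \<open>auto simp: P_def intro!: continuous_intros\<close>)
    define \<theta> where "\<theta> = S \<zeta>"
    have chi_in: "\<theta> \<in> AX" unfolding \<theta>_def using Smap zeta_in by blast
    have chic: "continuous_map X euclidean \<theta>" using good_cont[OF gX chi_in] .
    have chi_eq: "\<theta> x = P (of_int n) *\<^sub>R \<phi> x" if n: "n \<ge> 1" and x: "x \<in> As s n" for n x
    proof -
      obtain u where u: "u \<in> AX" "u x \<noteq> 0" "\<forall>z. u z \<noteq> 0 \<longrightarrow> z \<in> As s n"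
        using bumpA[OF x] by blast
      have Tu_in: "T u \<in> AY" using Tmap u(1) by blast
      define a' where "a' = (\<lambda>y. \<zeta> y - P (of_int n) *\<^sub>R T \<phi> y)"
      have a'_in: "a' \<in> AY" unfolding a'_def
        using good_diff[OF gY zeta_in good_scale[OF gY Tphi_in]] .
      have "\<forall>y\<in>topspace Y. T u y \<noteq> 0 \<longrightarrow> a' y = 0"
      proof (intro ballI impI)
        fix y assume y: "y \<in> topspace Y" "T u y \<noteq> 0"
        then have "\<psi> y = of_int n *\<^sub>R w" unfolding \<psi>_def using K1[OF s u(1) u(3)] by blast
        then have "norm (\<psi> y) / norm w = of_int n" using n w by simp
        then show "a' y = 0" using y Tphi by (simp add: a'_def \<zeta>_def)
      qed
      then have h: "\<forall>z\<in>topspace X. S (T u) z \<noteq> 0 \<longrightarrow> S a' z = 0" using CS Tu_in a'_in by blast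
      have Sa': "S a' = (\<lambda>z. \<theta> z - P (of_int n) *\<^sub>R \<phi> z)"
        unfolding a'_def \<theta>_def using Sdiff[OF zeta_in good_scale[OF gY Tphi_in]] Ssc Tphi_in ST phi
        by simp
      have xt: "x \<in> topspace X" using x by (simp add: As_def)
      show ?thesis using h[rule_format, OF xt] u(1,2) ST Sa' by (simp add: fun_eq_iff)
    qed
    define U where "U = {x \<in> topspace X. \<theta> x \<in> ball (\<theta> x1) 1}"
    have Uo: "openin X U" unfolding U_def
      by (rule openin_continuous_map_preimage[OF chic]) simp
    have x1U: "x1 \<in> U" using x1 by (simp add: U_def)
    define N where "N = \<lceil>norm (\<theta> x1) + 1\<rceil> + 1"
    have "\<forall>n\<ge>N. \<forall>x\<in>U. x \<notin> As s n"
    proof (intro allI impI ballI notI)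
      fix n x assume n: "n \<ge> N" and xU: "x \<in> U" and x: "x \<in> As s n"
      have "0 < norm (\<theta> x1) + 1" using norm_ge_zero[of "\<theta> x1"] by linarith
      then have "1 \<le> \<lceil>norm (\<theta> x1) + 1\<rceil>" by (simp only: one_le_ceiling)
      then have n1: "n \<ge> 1" using n unfolding N_def by linarith
      have xs: "\<phi> x \<noteq> 0" "\<bar>s + 1 / sqrt (norm (\<phi> x)) - of_int n\<bar> < 1/4" using x by (auto simp: As_def)
      have "of_int n < P (of_int n) * norm (\<phi> x)"
        using Pbound[OF n1 _ s xs(2)] xs(1) unfolding P_def by simp
      also have "\<dots> = norm (\<theta> x)" using chi_eq[OF n1 x] n1 unfolding P_def by simp
      also have "\<dots> < norm (\<theta> x1) + 1" using xU norm_triangle_ineq2[of "\<theta> x" "\<theta> x1"]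
        by (simp add: U_def dist_norm norm_minus_commute)
      finally show False using n unfolding N_def by linarith
    qed
    then show ?thesis using Uo x1U by blast
  qed
  obtain U0 N0 where U0: "openin X U0" "x1 \<in> U0" "\<forall>n\<ge>N0. \<forall>x\<in>U0. x \<notin> As 0 n"
    using Ubound[of 0] by auto
  obtain U1 N1 where U1: "openin X U1" "x1 \<in> U1" "\<forall>n\<ge>N1. \<forall>x\<in>U1. x \<notin> As (1/3) n"
    using Ubound[of "1/3"] by auto
  obtain U2 N2 where U2: "openin X U2" "x1 \<in> U2" "\<forall>n\<ge>N2. \<forall>x\<in>U2. x \<notin> As (2/3) n"
    using Ubound[of "2/3"] by auto
  define N where "N = max 0 (max N0 (max N1 N2))"
  define \<delta> :: real where "\<delta> = 1 / (of_int N + 2)^2"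
  have dpos: "\<delta> > 0" unfolding \<delta>_def N_def by simp
  define W where "W = U0 \<inter> U1 \<inter> U2 \<inter> {x \<in> topspace X. \<phi> x \<in> ball 0 \<delta>}"
  have Wo: "openin X W" unfolding W_def
    by (intro openin_Int U0(1) U1(1) U2(1) openin_continuous_map_preimage[OF phic]) simp
  have x1W: "x1 \<in> W" using U0 U1 U2 x1 phi0 dpos by (simp add: W_def)
  have Wz: "\<phi> x = 0" if xW: "x \<in> W" for x
  proof (rule ccontr)
    assume nz: "\<phi> x \<noteq> 0"
    define t where "t = norm (\<phi> x)"
    have t: "t > 0" "t < \<delta>" using nz xW by (auto simp: t_def W_def)
    have N0': "of_int N \<ge> (0::real)" unfolding N_def by simp
    have "sqrt t < sqrt \<delta>" using t by (simp add: real_sqrt_less_iff)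
    also have "sqrt \<delta> = 1 / (of_int N + 2)" unfolding \<delta>_def using N0'
      by (simp add: real_sqrt_divide)
    finally have "sqrt t < 1 / (of_int N + 2)" .
    then have r: "1 / sqrt t > of_int N + 2" using t N0'
      by (simp add: field_simps)
    obtain s n where sn: "s \<in> {0, 1/3, 2/3::real}" "\<bar>s + 1 / sqrt t - of_int n\<bar> < 1/4"
      using cover3[of "1 / sqrt t"] by blast
    have sge: "s \<ge> 0" "s \<le> 1" using sn(1) by auto
    have "(of_int n :: real) > of_int N + 1" using sn(2) r sge unfolding abs_less_iff by linarith
    then have nN: "n \<ge> N" by linarith
    have xA: "x \<in> As s n" using xW nz sn(2) by (auto simp: As_def W_def t_def)
    have xU: "x \<in> U0" "x \<in> U1" "x \<in> U2" using xW by (auto simp: W_def)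
    have NN: "n \<ge> N0" "n \<ge> N1" "n \<ge> N2" using nN unfolding N_def by auto
    from sn(1) consider "s = 0" | "s = 1/3" | "s = 2/3" by blast
    then show False
    proof cases
      case 1 then have "x \<in> As 0 n" using xA by (metis)
      then show False using U0(3) xU NN by blast
    next
      case 2 then have "x \<in> As (1/3) n" using xA by (metis)
      then show False using U1(3) xU NN by blast
    next
      case 3 then have "x \<in> As (2/3) n" using xA by (metis)
      then show False using U2(3) xU NN by blast
    qed
  qed
  obtain u where u: "u \<in> AX" "u x1 \<noteq> 0" "\<forall>z. u z \<noteq> 0 \<longrightarrow> z \<in> W"
    using good_bump[OF gX Wo x1W e0] by blast
  have "\<forall>x\<in>topspace X. u x \<noteq> 0 \<longrightarrow> \<phi> x = 0" using u(3) Wz by blast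
  then have h: "\<forall>y\<in>topspace Y. T u y \<noteq> 0 \<longrightarrow> T \<phi> y = 0" using CT u(1) phi by blast
  obtain y where "y \<in> topspace Y" "T u y \<noteq> 0" using Tnz[OF u(1,2)] by blast
  then show False using h Tphi w by auto
qed


lemma sit_sym:
  assumes situation:
    "(realcompact X \<and> realcompact Y \<and> AX = C_space X \<and> AY = C_space Y)
     \<or> (\<exists>mX mY. X = mtopology_of mX \<and> Y = mtopology_of mY \<and> mcomplete_of mX \<and> mcomplete_of mY
            \<and> AX = Cbu_space mX \<and> AY = Cbu_space mY)"
  shows "(S1sp X AX \<and> S1sp Y AY) \<or> (S3sp X AX \<and> S3sp Y AY)"
  using assms unfolding S1sp_def S3sp_def realcompact_def by blast

theorem corollary2p5:
  fixes X :: "'x topology" and Y :: "'y topology"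
    and AX :: "('x \<Rightarrow> 'e::real_normed_vector) set"
    and AY :: "('y \<Rightarrow> 'f::real_normed_vector) set"
    and T :: "('x \<Rightarrow> 'e) \<Rightarrow> ('y \<Rightarrow> 'f)"
  assumes situation:
    "(realcompact X \<and> realcompact Y \<and> AX = C_space X \<and> AY = C_space Y)
     \<or> (\<exists>mX mY. X = mtopology_of mX \<and> Y = mtopology_of mY \<and> mcomplete_of mX \<and> mcomplete_of mY
            \<and> AX = Cbu_space mX \<and> AY = Cbu_space mY)"
    and X_ne: "topspace X \<noteq> {}" and Y_ne: "topspace Y \<noteq> {}"
    and E_fin: "finite_dim_space TYPE('e)"
    and T_lin: "linear_on AX T"
    and T_bisep: "biseparating_map X Y AX AY T"
  shows "finite_dim_space TYPE('f) \<and> (\<exists>L::'e \<Rightarrow> 'f. linear L \<and> bij L)"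
proof -
  have sit: "(S1sp X AX \<and> S1sp Y AY) \<or> (S3sp X AX \<and> S3sp Y AY)"
    by (rule sit_sym[OF situation])
  have sit': "(S1sp Y AY \<and> S1sp X AX) \<or> (S3sp Y AY \<and> S3sp X AX)" using sit by blast
  have gX: "goodsp X AX" and gY: "goodsp Y AY" using sit by (auto simp: goodsp_def)
  define S where "S = inv_into AX T"
  have bij: "bij_betw T AX AY" using T_bisep by (simp add: biseparating_map_def)
  have Tmap: "\<forall>f\<in>AX. T f \<in> AY" using bij by (auto simp: bij_betw_def)
  have Smap: "\<forall>g\<in>AY. S g \<in> AX" unfolding S_def using bij
    by (auto intro: inv_into_into simp: bij_betw_def)
  have TS: "\<forall>g\<in>AY. T (S g) = g" unfolding S_def using bij
    by (auto intro: f_inv_into_f simp: bij_betw_def)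
  have ST: "\<forall>f\<in>AX. S (T f) = f" unfolding S_def using bij
    by (auto intro: inv_into_f_f simp: bij_betw_def)
  have Tadd: "\<forall>f\<in>AX. \<forall>g\<in>AX. T (\<lambda>x. f x + g x) = (\<lambda>y. T f y + T g y)"
    using T_lin by (simp add: linear_on_def)
  have Tsc: "\<forall>c. \<forall>f\<in>AX. T (\<lambda>x. c *\<^sub>R f x) = (\<lambda>y. c *\<^sub>R T f y)"
    using T_lin by (simp add: linear_on_def)
  have Tsep: "\<forall>f\<in>AX. \<forall>g\<in>AX. cozero X f \<inter> cozero X g = {} \<longrightarrow> cozero Y (T f) \<inter> cozero Y (T g) = {}"
    using T_bisep by (simp add: biseparating_map_def separating_map_def)
  have Sadd: "\<forall>f\<in>AY. \<forall>g\<in>AY. S (\<lambda>x. f x + g x) = (\<lambda>y. S f y + S g y)"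
    using T_bisep by (simp add: biseparating_map_def separating_map_def S_def)
  have Ssep: "\<forall>f\<in>AY. \<forall>g\<in>AY. cozero Y f \<inter> cozero Y g = {} \<longrightarrow> cozero X (S f) \<inter> cozero X (S g) = {}"
    using T_bisep by (simp add: biseparating_map_def separating_map_def S_def)
  have Ssc: "\<forall>c. \<forall>g\<in>AY. S (\<lambda>x. c *\<^sub>R g x) = (\<lambda>y. c *\<^sub>R S g y)"
  proof (intro allI ballI)
    fix c and g assume g: "g \<in> AY"
    have f: "S g \<in> AX" using Smap g by blast
    have "T (\<lambda>x. c *\<^sub>R S g x) = (\<lambda>y. c *\<^sub>R T (S g) y)" using Tsc f by blast
    also have "\<dots> = (\<lambda>y. c *\<^sub>R g y)" using TS g by simp
    finally have "S (\<lambda>y. c *\<^sub>R g y) = S (T (\<lambda>x. c *\<^sub>R S g x))" by simp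
    also have "\<dots> = (\<lambda>x. c *\<^sub>R S g x)" using ST good_scale[OF gX f] by blast
    finally show "S (\<lambda>x. c *\<^sub>R g x) = (\<lambda>y. c *\<^sub>R S g y)" .
  qed
  obtain x0 where x0: "x0 \<in> topspace X" using X_ne by blast
  obtain y0 where y0: "y0 \<in> topspace Y" using Y_ne by blast
  define cY where "cY = (\<lambda>v::'f. \<lambda>y. if y \<in> topspace Y then v else 0)"
  define cX where "cX = (\<lambda>v::'e. \<lambda>x. if x \<in> topspace X then v else 0)"
  have cY_in: "cY v \<in> AY" for v unfolding cY_def by (rule good_const[OF gY])
  have cX_in: "cX v \<in> AX" for v unfolding cX_def by (rule good_const[OF gX])
  define Lf where "Lf = (\<lambda>v. S (cY v) x0)"
  define Le where "Le = (\<lambda>e. T (cX e) y0)"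
  have cY_add: "cY (a + b) = (\<lambda>y. cY a y + cY b y)" for a b by (auto simp: cY_def)
  have cY_sc: "cY (c *\<^sub>R a) = (\<lambda>y. c *\<^sub>R cY a y)" for c a by (auto simp: cY_def)
  have cX_add: "cX (a + b) = (\<lambda>y. cX a y + cX b y)" for a b by (auto simp: cX_def)
  have cX_sc: "cX (c *\<^sub>R a) = (\<lambda>y. c *\<^sub>R cX a y)" for c a by (auto simp: cX_def)
  have linLf: "linear Lf"
  proof (rule linearI)
    fix a b show "Lf (a + b) = Lf a + Lf b"
      unfolding Lf_def cY_add using Sadd cY_in by simp
  next
    fix c a show "Lf (c *\<^sub>R a) = c *\<^sub>R Lf a"
      unfolding Lf_def cY_sc using Ssc cY_in by simp
  qed
  have linLe: "linear Le"
  proof (rule linearI)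
    fix a b show "Le (a + b) = Le a + Le b"
      unfolding Le_def cX_add using Tadd cX_in by simp
  next
    fix c a show "Le (c *\<^sub>R a) = c *\<^sub>R Le a"
      unfolding Le_def cX_sc using Tsc cX_in by simp
  qed
  have Lf0: "Lf v = 0 \<Longrightarrow> v = 0" for v
  proof (rule ccontr)
    assume h: "Lf v = 0" "v \<noteq> 0"
    have phi: "S (cY v) \<in> AX" using Smap cY_in by blast
    have "\<forall>y\<in>topspace Y. T (S (cY v)) y = v" using TS cY_in by (simp add: cY_def)
    then have "S (cY v) x0 \<noteq> 0"
      using mainM[OF sit Tmap Smap TS ST Tadd Tsc Sadd Ssc Tsep Ssep phi h(2) _ Y_ne x0] by blast
    then show False using h(1) by (simp add: Lf_def)
  qed
  have Le0: "Le e = 0 \<Longrightarrow> e = 0" for e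
  proof (rule ccontr)
    assume h: "Le e = 0" "e \<noteq> 0"
    have phi: "T (cX e) \<in> AY" using Tmap cX_in by blast
    have "\<forall>x\<in>topspace X. S (T (cX e)) x = e" using ST cX_in by (simp add: cX_def)
    then have "T (cX e) y0 \<noteq> 0"
      using mainM[OF sit' Smap Tmap ST TS Sadd Ssc Tadd Tsc Ssep Tsep phi h(2) _ X_ne y0] by blast
    then show False using h(1) by (simp add: Le_def)
  qed
  have injLf: "inj Lf"
  proof (rule injI)
    fix a b assume "Lf a = Lf b"
    then have "Lf (a - b) = 0" using linear_diff[OF linLf] by simp
    then show "a = b" using Lf0[of "a - b"] by simp
  qed
  have injLe: "inj Le"
  proof (rule injI)
    fix a b assume "Le a = Le b"
    then have "Le (a - b) = 0" using linear_diff[OF linLe] by simp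
    then show "a = b" using Le0[of "a - b"] by simp
  qed
  obtain B :: "'e set" where B: "finite B" "span B = UNIV"
    using E_fin by (auto simp: finite_dim_space_def)
  have "surj (Lf \<circ> Le)"
    by (rule fin_inj_surj[OF B]) (use linear_compose[OF linLe linLf] injLf injLe in \<open>auto intro: inj_compose\<close>)
  have surjLe: "surj Le"
  proof -
    have "v \<in> range Le" for v
    proof -
      obtain e where "Lf v = (Lf \<circ> Le) e" using \<open>surj (Lf \<circ> Le)\<close> by (metis surjD)
      then have "v = Le e" using injLf by (simp add: inj_eq)
      then show ?thesis by blast
    qed
    then show ?thesis by blast
  qed
  have "span (Le ` B) = Le ` span B" by (rule span_linear_image[OF linLe])
  also have "\<dots> = UNIV" using B(2) surjLe by simp
  finally have "finite_dim_space TYPE('f)"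
    unfolding finite_dim_space_def using B(1) by blast
  moreover have "bij Le" using injLe surjLe by (simp add: bij_def)
  ultimately show ?thesis using linLe by blast
qed

end
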